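(* Let $N=10$ and $f(u)=e^{g(u)}$ where $g\in C^3[0,\infty)$ satisfies $g'>0$, $g''>0$, $g'^2-g''\ge0$, $2g''^2-g'g'''>0$ on $[0,\infty)$. Let $v(r)=F^{-1}\big[\frac{r^2}{16}e^{-x(t)}\big]$, $t=-\log r$, for $0<r\le R$, with $x$, $t_0$, $R$ as in the context. Then $v''+\frac{N-1}{r}v'+f(v)\ge0$ for $0<r\le R$.
   Context: Let $F(u)=\int_u^\infty\frac{ds}{f(s)}$, $\eta(y)=F^{-1}(e^{-y})$ and $h(y)=1-f'(\eta(y))F(\eta(y))$ for $y\ge-\log F(0)$. Under the hypotheses, $h(y)\to0$ as $y\to\infty$ and $h'<0$, and there exist $t_0\in\mathbb{R}$ and a $C^2$ function $x:[t_0,\infty)\to\mathbb{R}$ such that $4(e^{x(t)}-1)=h(x(t)+2t+\log16)$ for all $t\ge t_0$, $x(t_0)+2t_0+\log16=-\log F(0)$, $|x(t)|\le1$ for all large $t$, and $\xi(t):=x(t)+2t+\log16$ is strictly increasing; for each $t$ the value $x(t)$ is the unique solution of the implicit equation with $x+2t+\log 16\ge -\log F(0)$. Set $R=e^{-t_0}$; then $v=\eta(\xi(t))$ is defined on $(0,R]$ with $v(R)=0$. *)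

theory Defs
  imports "HOL-Analysis.Analysis"
begin

definition Fint :: "(real \<Rightarrow> real) \<Rightarrow> real \<Rightarrow> real" where
  "Fint g u = integral {u..} (\<lambda>s. 1 / exp (g s))"

definition eta :: "(real \<Rightarrow> real) \<Rightarrow> real \<Rightarrow> real" where
  "eta g y = inv_into {0..} (Fint g) (exp (- y))"

text \<open>h(y) = 1 - f'(eta y) F(eta y), with f' = g' exp g, g1 the derivative of g.\<close>
definition hfun :: "(real \<Rightarrow> real) \<Rightarrow> (real \<Rightarrow> real) \<Rightarrow> real \<Rightarrow> real" where
  "hfun g g1 y = 1 - g1 (eta g y) * exp (g (eta g y)) * Fint g (eta g y)"

definition vfun :: "(real \<Rightarrow> real) \<Rightarrow> (real \<Rightarrow> real) \<Rightarrow> real \<Rightarrow> real" where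
  "vfun g x r = inv_into {0..} (Fint g) (r\<^sup>2 / 16 * exp (- x (- ln r)))"

end

theory Submission
  imports Defs
begin


lemma deriv_mono0:
  fixes f f' :: "real \<Rightarrow> real"
  assumes d: "\<And>u. u \<ge> 0 \<Longrightarrow> (f has_real_derivative f' u) (at u within {0..})"
    and nn: "\<And>u. a \<le> u \<Longrightarrow> u \<le> b \<Longrightarrow> f' u \<ge> 0" and a0: "0 \<le> a" and ab: "a \<le> b"
  shows "f a \<le> f b"
proof (rule DERIV_nonneg_imp_increasing_open[OF ab])
  fix x assume x: "a < x" "x < b"
  then have "x \<in> interior {0::real..}" using a0 by auto
  then have "at x within {0..} = at x" by (rule at_within_interior)
  then have "(f has_real_derivative f' x) (at x)" using d[of x] x a0 by simp
  then show "\<exists>y. (f has_real_derivative y) (at x) \<and> 0 \<le> y" using nn[of x] x by auto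
next
  have "continuous_on {0..} f" by (rule DERIV_continuous_on) (use d in auto)
  then show "continuous_on {a..b} f" by (rule continuous_on_subset) (use a0 in auto)
qed

lemma deriv_glue:
  fixes f :: "real \<Rightarrow> real"
  assumes "(f has_real_derivative D) (at x within {..x})" "(f has_real_derivative D) (at x within {x..})"
  shows "(f has_real_derivative D) (at x)"
proof -
  have l: "((\<lambda>y. (f y - f x) / (y - x)) \<longlongrightarrow> D) (at x within {..x})"
    using assms(1) by (simp add: has_field_derivative_iff)
  have r: "((\<lambda>y. (f y - f x) / (y - x)) \<longlongrightarrow> D) (at x within {x..})"
    using assms(2) by (simp add: has_field_derivative_iff)
  have "((\<lambda>y. (f y - f x) / (y - x)) \<longlongrightarrow> D) (at x)"
  proof (rule filterlim_split_at)
    show "((\<lambda>y. (f y - f x) / (y - x)) \<longlongrightarrow> D) (at_left x)"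
      by (rule tendsto_within_subset[OF l]) auto
    show "((\<lambda>y. (f y - f x) / (y - x)) \<longlongrightarrow> D) (at_right x)"
      by (rule tendsto_within_subset[OF r]) auto
  qed
  then show ?thesis by (simp add: has_field_derivative_iff)
qed

lemma sign_alg0:
  fixes N a D E :: real
  assumes D: "D > 0" and E: "E > 0"
  shows "N / D\<^sup>2 * (1 / E) - a / D * a * (1 / E) + 1 / E = (N - a * a * D + D\<^sup>2) / D\<^sup>2 * (1 / E)"
  using D E by (simp add: field_simps power2_eq_square)

lemma sign_alg:
  fixes a b c E :: real
  assumes D: "b + a\<^sup>2 > 0" and E: "E > 0"
  shows "(b * (b + a\<^sup>2) - a * (c + 2 * a * b)) / (b + a\<^sup>2)\<^sup>2 * (1 / E) - a / (b + a\<^sup>2) * a * (1 / E) + 1 / E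
     = (2 * b\<^sup>2 - a * c) / (b + a\<^sup>2)\<^sup>2 * (1 / E)"
proof -
  have "(b * (b + a\<^sup>2) - a * (c + 2 * a * b)) - a * a * (b + a\<^sup>2) + (b + a\<^sup>2)\<^sup>2 = 2 * b\<^sup>2 - a * c"
    by (simp add: power2_eq_square algebra_simps)
  then show ?thesis using sign_alg0[OF D E, of "b * (b + a\<^sup>2) - a * (c + 2 * a * b)" a] by simp
qed

locale gctx =
  fixes g g1 g2 g3 :: "real \<Rightarrow> real"
  assumes g1: "\<And>u. u \<ge> 0 \<Longrightarrow> (g has_real_derivative g1 u) (at u within {0..})"
    and g2: "\<And>u. u \<ge> 0 \<Longrightarrow> (g1 has_real_derivative g2 u) (at u within {0..})"
    and g3: "\<And>u. u \<ge> 0 \<Longrightarrow> (g2 has_real_derivative g3 u) (at u within {0..})"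
    and g1_pos: "\<And>u. u \<ge> 0 \<Longrightarrow> g1 u > 0"
    and g2_pos: "\<And>u. u \<ge> 0 \<Longrightarrow> g2 u > 0"
    and g12: "\<And>u. u \<ge> 0 \<Longrightarrow> (g1 u)\<^sup>2 - g2 u \<ge> 0"
    and g123: "\<And>u. u \<ge> 0 \<Longrightarrow> 2 * (g2 u)\<^sup>2 - g1 u * g3 u > 0"
begin

lemma g1_mono: "0 \<le> u \<Longrightarrow> u \<le> s \<Longrightarrow> g1 u \<le> g1 s"
  by (rule deriv_mono0[OF g2]) (auto intro!: less_imp_le[OF g2_pos])

lemma g_convex:
  assumes "0 \<le> u" "u \<le> s" shows "g u + g1 u * (s - u) \<le> g s"
proof -
  have "(\<lambda>s. g s - g1 u * s) u \<le> (\<lambda>s. g s - g1 u * s) s"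
  proof (rule deriv_mono0[where f="\<lambda>s. g s - g1 u * s" and f'="\<lambda>s. g1 s - g1 u"])
    fix w :: real assume "w \<ge> 0"
    show "((\<lambda>s. g s - g1 u * s) has_real_derivative g1 w - g1 u) (at w within {0..})"
      using g1[OF \<open>w\<ge>0\<close>] by (auto intro!: derivative_eq_intros)
  qed (use assms g1_mono in auto)
  then show ?thesis by (simp add: algebra_simps)
qed

lemma g_cont: "continuous_on {0..} g"
  by (rule DERIV_continuous_on) (use g1 in auto)

lemma k_cont: "continuous_on {0..} (\<lambda>s. 1 / exp (g s))"
  by (intro continuous_intros g_cont) auto

lemma k_int_bound:
  assumes u: "u \<ge> 0"
  shows "(\<lambda>s. 1 / exp (g s)) integrable_on {u..}"
    and "Fint g u \<le> exp (- g u) / g1 u"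
    and "Fint g u \<ge> 0"
proof -
  define a where "a = g1 u"
  have a: "a > 0" using g1_pos u a_def by auto
  define C where "C = exp (- g u + a * u)"
  have bnd: "1 / exp (g s) \<le> C * exp (- a * s)" if "s \<in> {u..}" for s
  proof -
    have "g u + a * (s - u) \<le> g s" using g_convex[of u s] that u a_def by auto
    then have "exp (- g s) \<le> exp (- g u + a * u + - a * s)" by (simp add: algebra_simps)
    also have "\<dots> = C * exp (- a * s)" by (simp add: C_def exp_add[symmetric])
    finally show ?thesis by (simp add: exp_minus field_simps)
  qed
  have hi: "((\<lambda>s. C * exp (- a * s)) has_integral C * (exp (- a * u) / a)) {u..}"
    by (rule has_integral_mult_right[OF has_integral_exp_minus_to_infinity[OF a]])
  show int: "(\<lambda>s. 1 / exp (g s)) integrable_on {u..}"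
  proof (rule integrable_on_all_intervals_integrable_bound[where g="\<lambda>s. C * exp (- a * s)"])
    fix c d :: real
    have "continuous_on {max u c..d} (\<lambda>s. 1 / exp (g s))"
      by (rule continuous_on_subset[OF k_cont]) (use u in auto)
    moreover have "{u..} \<inter> cbox c d = {max u c..d}" by auto
    ultimately have "(\<lambda>s. 1 / exp (g s)) integrable_on ({u..} \<inter> cbox c d)"
      by (simp add: integrable_continuous_interval)
    then show "(\<lambda>x. if x \<in> {u..} then 1 / exp (g x) else 0) integrable_on cbox c d"
      by (subst integrable_restrict_Int) simp
  next
    fix s assume "s \<in> {u..}" then show "norm (1 / exp (g s)) \<le> C * exp (- a * s)"
      using bnd by simp
  qed (use hi in blast)
  have "Fint g u \<le> integral {u..} (\<lambda>s. C * exp (- a * s))"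
    unfolding Fint_def by (rule integral_le[OF int]) (use hi bnd in auto)
  also have "\<dots> = C * (exp (- a * u) / a)" using hi by (rule integral_unique)
  also have "\<dots> = exp (- g u) / g1 u" by (simp add: C_def a_def exp_add[symmetric])
  finally show "Fint g u \<le> exp (- g u) / g1 u" .
  show "Fint g u \<ge> 0" unfolding Fint_def by (rule integral_nonneg[OF int]) auto
qed

lemma Fint_split:
  assumes w: "w \<ge> 0"
  shows "Fint g 0 = integral {0..w} (\<lambda>s. 1 / exp (g s)) + Fint g w"
proof -
  have i1: "((\<lambda>s. 1 / exp (g s)) has_integral integral {0..w} (\<lambda>s. 1 / exp (g s))) {0..w}"
    by (rule integrable_integral, rule integrable_continuous_interval, rule continuous_on_subset[OF k_cont]) auto
  have i2: "((\<lambda>s. 1 / exp (g s)) has_integral Fint g w) {w..}"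
    unfolding Fint_def by (rule integrable_integral, rule k_int_bound(1)[OF w])
  have "{0..w} \<inter> {w..} = {w}" using w by auto
  then have "negligible ({0..w} \<inter> {w..})" by simp
  moreover have "{0..w} \<union> {w..} = {0..}" using w by auto
  ultimately have "((\<lambda>s. 1 / exp (g s)) has_integral integral {0..w} (\<lambda>s. 1 / exp (g s)) + Fint g w) {0..}"
    using has_integral_Un[OF i1 i2] by metis
  then show ?thesis unfolding Fint_def[of g 0] by (rule integral_unique)
qed

lemma Fint_deriv:
  assumes u: "u \<ge> 0"
  shows "(Fint g has_real_derivative - (1 / exp (g u))) (at u within {0..})"
proof -
  define I where "I w = integral {0..w} (\<lambda>s. 1 / exp (g s))" for w
  have "(I has_real_derivative 1 / exp (g u)) (at u within {0..u+1})"
    unfolding I_def by (rule integral_has_real_derivative, rule continuous_on_subset[OF k_cont]) (use u in auto)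
  moreover have "at u within {0..u+1} = at u within {0..}"
    by (rule at_within_nhd[where S="{..<u+1}"]) auto
  ultimately have "(I has_real_derivative 1 / exp (g u)) (at u within {0..})" by simp
  then have "((\<lambda>w. Fint g 0 - I w) has_real_derivative - (1 / exp (g u))) (at u within {0..})"
    by (auto intro!: derivative_eq_intros)
  then show ?thesis
    by (rule has_field_derivative_transform_within[where d=1]) (use u Fint_split in \<open>auto simp: I_def\<close>)
qed

definition Fe :: "real \<Rightarrow> real" where
  "Fe u = (if u \<ge> 0 then Fint g u else Fint g 0 - u / exp (g 0))"

lemma Fe_deriv: "(Fe has_real_derivative - (1 / exp (g (max u 0)))) (at u)"
proof -
  have lin: "((\<lambda>w. Fint g 0 - w / exp (g 0)) has_real_derivative - (1 / exp (g 0))) (at u within A)" for A u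
    by (auto intro!: derivative_eq_intros)
  consider "u < 0" | "u > 0" | "u = 0" by linarith
  then show ?thesis
  proof cases
    case 1
    have "eventually (\<lambda>w. w \<in> {..<0}) (nhds u)" using 1 by (intro eventually_nhds_in_open) auto
    then have ev: "eventually (\<lambda>w. Fe w = Fint g 0 - w / exp (g 0)) (nhds u)"
      by eventually_elim (auto simp: Fe_def)
    show ?thesis using 1 lin[of u UNIV] by (subst DERIV_cong_ev[OF refl ev refl]) auto
  next
    case 2
    have "u \<in> interior {0::real..}" using 2 by auto
    then have "at u within {0..} = at u" by (rule at_within_interior)
    then have d: "(Fint g has_real_derivative - (1 / exp (g u))) (at u)" using Fint_deriv[of u] 2 by simp
    have "eventually (\<lambda>w. w \<in> {0<..}) (nhds u)" using 2 by (intro eventually_nhds_in_open) auto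
    then have ev: "eventually (\<lambda>w. Fe w = Fint g w) (nhds u)"
      by eventually_elim (auto simp: Fe_def)
    show ?thesis using 2 d by (subst DERIV_cong_ev[OF refl ev refl]) auto
  next
    case 3
    show ?thesis unfolding 3 max.idem
    proof (rule deriv_glue)
      show "(Fe has_real_derivative - (1 / exp (g 0))) (at 0 within {..0})"
        by (rule has_field_derivative_transform_within[OF lin[of 0 "{..0}"], where d=1]) (auto simp: Fe_def)
      show "(Fe has_real_derivative - (1 / exp (g 0))) (at 0 within {0..})"
        by (rule has_field_derivative_transform_within[OF Fint_deriv[of 0], where d=1]) (auto simp: Fe_def)
    qed
  qed
qed

lemma Fe_cont: "isCont Fe u"
  by (rule DERIV_isCont[OF Fe_deriv])

lemma Fe_strict: assumes "a < b" shows "Fe b < Fe a"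
proof (rule DERIV_neg_imp_decreasing[where f=Fe, OF assms])
  fix x show "\<exists>y. (Fe has_real_derivative y) (at x) \<and> y < 0"
    using Fe_deriv[of x] by (intro exI[of _ "- (1 / exp (g (max x 0)))"]) simp
qed

lemma Fe_inj: "inj Fe"
  by (rule linorder_injI) (metis Fe_strict order_less_irrefl)

lemma Fint_pos: "Fint g 0 > 0"
  using Fe_strict[of 0 1] k_int_bound(3)[of 1] by (simp add: Fe_def)

lemma Fe_surj:
  assumes y: "y > 0" shows "\<exists>u. Fe u = y"
proof (cases "y \<ge> Fint g 0")
  case True
  define u where "u = - (y - Fint g 0) * exp (g 0)"
  have "Fe u = y"
  proof (cases "u < 0")
    case True then show ?thesis by (simp add: Fe_def u_def)
  next
    case False then have "\<not> Fint g 0 < y" using mult_neg_pos[of "Fint g 0 - y" "exp (g 0)"]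
      by (auto simp: u_def)
    then have "y = Fint g 0" using \<open>y \<ge> Fint g 0\<close> by linarith
    then show ?thesis using False by (simp add: Fe_def u_def)
  qed
  then show ?thesis by blast
next
  case False
  define c where "c = g 0"
  define d where "d = g1 0"
  have d: "d > 0" using g1_pos d_def by auto
  define U where "U = max 0 ((- ln (y * d) - c) / d) + 1"
  have U0: "U \<ge> 0" by (simp add: U_def)
  have "d * U > - ln (y * d) - c" using d
    by (simp add: U_def field_simps max_def split: if_splits)
  then have "- (c + d * U) < ln (y * d)" by simp
  then have "exp (- (c + d * U)) < y * d" using y d by (metis exp_less_cancel_iff exp_ln mult_pos_pos)
  then have e1: "exp (- (c + d * U)) / d < y" using d by (simp add: field_simps)
  have "g 0 + g1 0 * (U - 0) \<le> g U" by (rule g_convex) (use U0 in auto)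
  then have "exp (- g U) \<le> exp (- (c + d * U))" by (simp add: c_def d_def)
  moreover have "d \<le> g1 U" using g1_mono[of 0 U] U0 d_def by auto
  ultimately have "exp (- g U) / g1 U \<le> exp (- (c + d * U)) / d" using d
    by (intro frac_le) auto
  then have "Fe U < y" using k_int_bound(2)[OF U0] e1 U0 by (simp add: Fe_def)
  moreover have "Fe 0 \<ge> y" using False by (simp add: Fe_def)
  ultimately have "\<exists>u. 0 \<le> u \<and> u \<le> U \<and> Fe u = y"
    using U0 by (intro IVT2) (auto intro: Fe_cont)
  then show ?thesis by blast
qed

definition G :: "real \<Rightarrow> real" where "G = inv Fe"

lemma G_Fe: "G (Fe u) = u"
  unfolding G_def using Fe_inj by simp

lemma Fe_G: "y > 0 \<Longrightarrow> Fe (G y) = y"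
  unfolding G_def using Fe_surj by (metis f_inv_into_f rangeI)

lemma G_deriv:
  assumes y: "y > 0"
  shows "(G has_real_derivative - exp (g (max (G y) 0))) (at y)"
proof -
  have "isCont G (Fe (G y))"
    by (rule isCont_inverse_function[where d=1]) (auto simp: G_Fe Fe_cont)
  then have c: "isCont G y" using Fe_G[OF y] by simp
  have "(G has_real_derivative inverse (- (1 / exp (g (max (G y) 0))))) (at y)"
    by (rule DERIV_inverse_function[where a=0 and b="y+1", OF Fe_deriv _ _ _ _ c])
       (use y Fe_G in auto)
  then show ?thesis by (simp add: inverse_eq_divide)
qed

lemma G_inv_into:
  assumes y: "0 < y" "y \<le> Fint g 0"
  shows "inv_into {0..} (Fint g) y = G y" "G y \<ge> 0" "Fint g (G y) = y"
proof -
  have "G y \<ge> 0"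
  proof (rule ccontr)
    assume "\<not> G y \<ge> 0"
    then have "Fe (G y) > Fint g 0" using exp_gt_zero[of "g 0"]
      by (simp add: Fe_def field_simps)
    then show False using Fe_G[OF y(1)] y by simp
  qed
  then show "G y \<ge> 0" .
  show fg: "Fint g (G y) = y" using Fe_G[OF y(1)] \<open>G y \<ge> 0\<close> by (simp add: Fe_def)
  have "inj_on (Fint g) {0..}"
  proof (rule inj_onI)
    fix a b assume "a \<in> {0..}" "b \<in> {0..}" "Fint g a = Fint g b"
    then have "Fe a = Fe b" by (simp add: Fe_def)
    then show "a = b" using Fe_inj by (simp add: inj_eq)
  qed
  then show "inv_into {0..} (Fint g) y = G y"
    using fg \<open>G y \<ge> 0\<close> by (metis atLeast_iff inv_into_f_f)
qed

lemma tail_small: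
  assumes y: "y > 0" and u0: "u0 \<ge> 0" shows "\<exists>U\<ge>u0. exp (- g U) / g1 U < y"
proof -
  define c where "c = g 0"
  define d where "d = g1 0"
  have d: "d > 0" using g1_pos d_def by auto
  define U where "U = max u0 ((- ln (y * d) - c) / d) + 1"
  have U0: "U \<ge> 0" "U \<ge> u0" using u0 by (auto simp: U_def)
  have "d * U > - ln (y * d) - c" using d
    by (simp add: U_def field_simps max_def split: if_splits)
  then have "- (c + d * U) < ln (y * d)" by simp
  then have "exp (- (c + d * U)) < y * d" using y d by (metis exp_less_cancel_iff exp_ln mult_pos_pos)
  then have e1: "exp (- (c + d * U)) / d < y" using d by (simp add: field_simps)
  have "g 0 + g1 0 * (U - 0) \<le> g U" by (rule g_convex) (use U0 in auto)
  then have "exp (- g U) \<le> exp (- (c + d * U))" by (simp add: c_def d_def)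
  moreover have "d \<le> g1 U" using g1_mono[of 0 U] U0 d_def by auto
  ultimately have "exp (- g U) / g1 U \<le> exp (- (c + d * U)) / d" using d
    by (intro frac_le) auto
  then show ?thesis using e1 U0 by (intro exI[of _ U]) auto
qed

lemma Fint_lower:
  assumes u: "u \<ge> 0"
  shows "g1 u / (g2 u + (g1 u)\<^sup>2) * exp (- g u) \<le> Fint g u"
proof -
  define D where "D s = g2 s + (g1 s)\<^sup>2" for s
  have Dpos: "D s > 0" if "s \<ge> 0" for s using g2_pos[OF that] by (simp add: D_def add_pos_nonneg)
  define \<phi> where "\<phi> s = g1 s / (g2 s + (g1 s)\<^sup>2) * exp (- g s)" for s
  define \<phi>' where "\<phi>' s = (g2 s * (g2 s + (g1 s)\<^sup>2) - g1 s * (g3 s + 2 * g1 s * g2 s)) / (g2 s + (g1 s)\<^sup>2)\<^sup>2 * exp (- g s)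
        - g1 s / (g2 s + (g1 s)\<^sup>2) * g1 s * exp (- g s)" for s
  have dphi: "(\<phi> has_real_derivative \<phi>' s) (at s within {0..})" if s: "s \<ge> 0" for s
  proof -
    have Dn: "g2 s + (g1 s)\<^sup>2 \<noteq> 0" using Dpos[OF s] by (simp add: D_def)
    show ?thesis unfolding \<phi>_def
      apply (rule derivative_eq_intros g1[OF s] g2[OF s] g3[OF s] refl | (simp add: Dn; fail))+
      using Dn apply (simp add: \<phi>'_def D_def field_simps power2_eq_square)
      done
  qed
  define \<psi> where "\<psi> s = \<phi> s - Fint g s" for s
  have dpsi: "(\<psi> has_real_derivative \<phi>' s + 1 / exp (g s)) (at s within {0..})" if s: "s \<ge> 0" for s
    unfolding \<psi>_def using dphi[OF s] Fint_deriv[OF s] by (auto intro!: derivative_eq_intros)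
  have sign: "\<phi>' s + 1 / exp (g s) \<ge> 0" if s: "s \<ge> 0" for s
  proof -
    have "\<phi>' s + 1 / exp (g s) = (2 * (g2 s)\<^sup>2 - g1 s * g3 s) / (D s)\<^sup>2 * exp (- g s)"
      using sign_alg[of "g2 s" "g1 s" "exp (g s)" "g3 s"] Dpos[OF s]
      unfolding \<phi>'_def D_def exp_minus inverse_eq_divide by simp
    also have "\<dots> \<ge> 0" using g123[OF s] by simp
    finally show ?thesis by simp
  qed
  have mono: "\<psi> u \<le> \<psi> s" if "s \<ge> u" for s
    by (rule deriv_mono0[OF dpsi sign]) (use u that in auto)
  show ?thesis
  proof (rule ccontr)
    assume "\<not> ?thesis"
    then have del: "\<psi> u > 0" by (simp add: \<psi>_def \<phi>_def)
    obtain U where U: "U \<ge> u" "exp (- g U) / g1 U < \<psi> u" using tail_small[OF del u] by blast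
    have U0: "U \<ge> 0" using U u by linarith
    have "\<phi> U \<le> exp (- g U) / g1 U"
    proof -
      have "g1 U / D U \<le> 1 / g1 U" using Dpos[OF U0] g1_pos[OF U0]
        by (simp add: D_def field_simps power2_eq_square g2_pos[OF U0] less_imp_le)
      then have "g1 U / D U * exp (- g U) \<le> 1 / g1 U * exp (- g U)" by (intro mult_right_mono) auto
      then show ?thesis by (simp add: \<phi>_def D_def)
    qed
    moreover have "\<psi> U \<le> \<phi> U" using k_int_bound(3)[OF U0] by (simp add: \<psi>_def)
    ultimately show False using mono[OF U(1)] U(2) by linarith
  qed
qed

end



lemma poly_f:
  fixes p q :: real
  assumes "0 \<le> q" "p \<le> 1"
  shows "q * ((5 - p) * (3 - 2 * p) + q * (10 - 3 * p) + q\<^sup>2) \<ge> 0"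
  using assms by (intro mult_nonneg_nonneg add_nonneg_nonneg) auto

lemma final_alg:
  fixes a b c P X y x2 :: real
  assumes a: "a > 0" and b: "b > 0" and ba: "b \<le> a\<^sup>2" and c: "a * c \<le> 2 * b\<^sup>2"
    and P: "P > 0" and aP: "a * P \<le> 1" and lowP: "a \<le> (b + a\<^sup>2) * P"
    and h0: "4 * (X - 1) = 1 - a * P"
    and r1: "4 * X * (y - 2) = - (P * y * ((b + a\<^sup>2) * P - a))"
    and r2: "4 * X * (y - 2)\<^sup>2 + 4 * X * x2 = P * y\<^sup>2 * (1 - a * P) * ((b + a\<^sup>2) * P - a)
        - P * x2 * ((b + a\<^sup>2) * P - a)
        + P * y\<^sup>2 * (- (c + 2 * a * b) * P\<^sup>2 + (b + a\<^sup>2) * P * (1 - a * P) + b * P)"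
  shows "y\<^sup>2 * (a * P - 1) + x2 - 8 * y + 16 * X \<ge> 0"
proof -
  define p where "p = a * P"
  define Q where "Q = (b + a\<^sup>2) * P - a"
  define q where "q = P * Q"
  define H where "H = 5 - p"
  define Z where "Z = H + q"
  have p0: "p > 0" using a P by (simp add: p_def)
  have p1: "p \<le> 1" using aP by (simp add: p_def)
  have Q0: "Q \<ge> 0" using lowP by (simp add: Q_def)
  have q0: "q \<ge> 0" using Q0 P by (simp add: q_def)
  have qform: "q = b * P\<^sup>2 + p\<^sup>2 - p" by (simp add: q_def Q_def p_def power2_eq_square algebra_simps)
  have "b * P\<^sup>2 \<le> a\<^sup>2 * P\<^sup>2" using ba P by (intro mult_right_mono) auto
  then have "b * P\<^sup>2 \<le> p\<^sup>2" by (simp add: p_def power_mult_distrib)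
  moreover have "p\<^sup>2 \<le> p" using p0 p1 by (simp add: power2_eq_square mult_le_cancel_left1)
  ultimately have qp: "q \<le> p" using qform by linarith
  have X4: "4 * X = H" using h0 by (simp add: H_def p_def)
  have H0: "H > 0" using p1 by (simp add: H_def)
  have Z0: "Z > 0" using H0 q0 by (simp add: Z_def)
  define Bf where "Bf = P * (1 - a * P) * Q + P * (- (c + 2 * a * b) * P\<^sup>2 + (b + a\<^sup>2) * P * (1 - a * P) + b * P)"
  define B0 where "B0 = P * (1 - a * P) * Q + P * (- (2 * b\<^sup>2 / a + 2 * a * b) * P\<^sup>2 + (b + a\<^sup>2) * P * (1 - a * P) + b * P)"
  have "Bf - B0 = (2 * b\<^sup>2 / a - c) * P ^ 3"
    by (simp add: Bf_def B0_def algebra_simps power2_eq_square power3_eq_cube)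
  moreover have "2 * b\<^sup>2 / a - c \<ge> 0" using c a by (simp add: field_simps)
  moreover have "P ^ 3 > 0" using P by simp
  ultimately have BfB0: "Bf \<ge> B0" by (metis diff_ge_0_iff_ge zero_le_mult_iff less_imp_le)
  have B0q: "B0 = - q - 2 * q\<^sup>2 / p"
    using a P unfolding B0_def q_def Q_def p_def
    by (simp add: field_simps power2_eq_square power3_eq_cube)
  have "q * q \<le> p * q" using qp q0 by (simp add: mult_right_mono)
  then have "q\<^sup>2 / p \<le> q" using p0 by (simp add: power2_eq_square field_simps)
  then have Bf3: "Bf \<ge> - 3 * q" using BfB0 B0q by linarith
  have "y * Z = y * (4 * X + q)" by (simp add: Z_def X4)
  also have "\<dots> = 8 * X" using r1 by (simp add: q_def Q_def algebra_simps)
  finally have yZ: "y * Z = 2 * H" using X4 by simp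
  have x2Z: "x2 * Z = y\<^sup>2 * Bf - H * (y - 2)\<^sup>2"
  proof -
    have "x2 * Z = x2 * (4 * X + q)" by (simp add: Z_def X4)
    also have "\<dots> = y\<^sup>2 * Bf - 4 * X * (y - 2)\<^sup>2" using r2 by (simp add: Bf_def q_def Q_def algebra_simps)
    finally show ?thesis using X4 by simp
  qed
  have "(y\<^sup>2 * (a * P - 1) + x2 - 8 * y + 16 * X) * Z
      = y\<^sup>2 * (a * P - 1) * Z + x2 * Z - 8 * y * Z + 4 * (4 * X) * Z" by (simp add: algebra_simps)
  also have "\<dots> = y\<^sup>2 * (p - 1) * Z + (y\<^sup>2 * Bf - H * (y - 2)\<^sup>2) - 8 * y * Z + 4 * H * Z"
    by (simp only: x2Z X4 p_def)
  also have "\<dots> \<ge> y\<^sup>2 * (p - 1) * Z - 3 * q * y\<^sup>2 - H * (y - 2)\<^sup>2 - 8 * y * Z + 4 * H * Z"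
  proof -
    have "y\<^sup>2 * Bf \<ge> y\<^sup>2 * (- 3 * q)" by (rule mult_left_mono[OF Bf3]) simp
    then show ?thesis by (simp add: algebra_simps)
  qed
  finally have T1: "(y\<^sup>2 * (a * P - 1) + x2 - 8 * y + 16 * X) * Z
      \<ge> y\<^sup>2 * (p - 1) * Z - 3 * q * y\<^sup>2 - H * (y - 2)\<^sup>2 - 8 * y * Z + 4 * H * Z" .
  have e1: "(y\<^sup>2 * (p - 1) * Z - 3 * q * y\<^sup>2 - H * (y - 2)\<^sup>2 - 8 * y * Z + 4 * H * Z) * Z\<^sup>2 = (y*Z)\<^sup>2*(p-1)*Z - 3*q*(y*Z)\<^sup>2 - H*(y*Z)\<^sup>2 + 4*H*(y*Z)*Z - 4*H*Z\<^sup>2 - 8*(y*Z)*Z\<^sup>2 + 4*H*Z^3"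
    by (simp add: algebra_simps power2_eq_square power3_eq_cube)
  have e2: "(2*(5-p))\<^sup>2*(p-1)*(5-p+q) - 3*q*(2*(5-p))\<^sup>2 - (5-p)*(2*(5-p))\<^sup>2 + 4*(5-p)*(2*(5-p))*(5-p+q) - 4*(5-p)*(5-p+q)\<^sup>2 - 8*(2*(5-p))*(5-p+q)\<^sup>2 + 4*(5-p)*(5-p+q)^3
   = 4 * (5-p) * (q * ((5 - p) * (3 - 2 * p) + q * (10 - 3 * p) + q\<^sup>2))"
    by (simp add: algebra_simps power2_eq_square power3_eq_cube)
  have "(y\<^sup>2 * (p - 1) * Z - 3 * q * y\<^sup>2 - H * (y - 2)\<^sup>2 - 8 * y * Z + 4 * H * Z) * Z\<^sup>2
      = 4 * (5-p) * (q * ((5 - p) * (3 - 2 * p) + q * (10 - 3 * p) + q\<^sup>2))"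
    unfolding e1 yZ using e2 by (simp add: Z_def H_def)
  also have "\<dots> \<ge> 0" using poly_f[OF q0 p1] H0 by (simp add: H_def)
  finally have "y\<^sup>2 * (p - 1) * Z - 3 * q * y\<^sup>2 - H * (y - 2)\<^sup>2 - 8 * y * Z + 4 * H * Z \<ge> 0"
    using Z0 by (simp add: zero_le_mult_iff)
  then have "(y\<^sup>2 * (a * P - 1) + x2 - 8 * y + 16 * X) * Z \<ge> 0" using T1 by linarith
  then show ?thesis using Z0 by (simp add: zero_le_mult_iff)
qed

lemma rel1_alg:
  fixes r X x1 y P a b v :: real
  assumes r: "r \<noteq> 0" and x1: "x1 = y - 2" and v: "v = - (P * y) / r"
    and e: "4 * (X * (x1 * (- (1 / r)))) = - (b * v * P + a * (P * y / r * (1 - a * P)))"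
  shows "4 * X * (y - 2) = - (P * y * ((b + a\<^sup>2) * P - a))"
proof -
  define w where "w = 1 / r"
  have rw: "r * w = 1" using r by (simp add: w_def)
  have v': "v = - (P * y * w)" using v by (simp add: w_def)
  have e': "4 * (X * (x1 * (- w))) = - (b * v * P + a * (P * y * w * (1 - a * P)))"
    using e by (simp add: w_def)
  show ?thesis using rw v' e' x1 by algebra
qed

lemma rel2_alg:
  fixes r X x1 y P a b c v z Q :: real
  assumes r: "r \<noteq> 0" and x1: "x1 = y - 2" and v: "v = - (P * y) / r" and Q: "Q = (b + a\<^sup>2) * P - a"
    and e: "4 * ((X * (x1 * (- (1 / r)))) * (y - 2) + X * (z * (- (1 / r)))) =
      - ((P * y / r * (1 - a * P) * y + P * (z * (- (1 / r)))) * Q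
         + P * y * ((c * v + 2 * a * (b * v)) * P + (b + a\<^sup>2) * (P * y / r * (1 - a * P)) - b * v))"
  shows "4 * X * (y - 2)\<^sup>2 + 4 * X * z = P * y\<^sup>2 * (1 - a * P) * Q - P * z * Q
     + P * y\<^sup>2 * (- (c + 2 * a * b) * P\<^sup>2 + (b + a\<^sup>2) * P * (1 - a * P) + b * P)"
proof -
  define w where "w = 1 / r"
  have rw: "r * w = 1" using r by (simp add: w_def)
  have v': "v = - (P * y * w)" using v by (simp add: w_def)
  have e': "4 * ((X * (x1 * (- w))) * (y - 2) + X * (z * (- w))) =
      - ((P * y * w * (1 - a * P) * y + P * (z * (- w))) * Q
         + P * y * ((c * v + 2 * a * (b * v)) * P + (b + a\<^sup>2) * (P * y * w * (1 - a * P)) - b * v))"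
    using e by (simp add: w_def)
  show ?thesis using rw v' e' x1 by algebra
qed

lemma final_id:
  fixes r X y P a z E G :: real
  assumes r: "r \<noteq> 0" and E: "E = r\<^sup>2 / 16 * (1 / X)" and X: "X > 0" and G: "G * E = P"
  shows "P / r\<^sup>2 * (y\<^sup>2 * (a * P - 1) + z + y) + (10 - 1) / r * (- (P * y) / r) + G
     = P / r\<^sup>2 * (y\<^sup>2 * (a * P - 1) + z - 8 * y + 16 * X)"
proof -
  have "G = 16 * X * P / r\<^sup>2" using G E r X by (simp add: field_simps)
  then show ?thesis using r by (simp add: field_simps power2_eq_square)
qed

lemma deriv_eq_on:
  fixes f h :: "real \<Rightarrow> real"
  assumes r: "0 < r" "r \<le> R" and eq: "\<And>s. s \<in> {0<..R} \<Longrightarrow> f s = h s"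
    and df: "(f has_real_derivative A) (at r within {0<..R})"
    and dh: "(h has_real_derivative B) (at r within {0<..R})"
  shows "A = B"
proof -
  have "(h has_real_derivative A) (at r within {0<..R})"
    by (rule has_field_derivative_transform_within[OF df, where d=1]) (use r eq in auto)
  moreover have "at r within {0<..R} \<noteq> bot"
  proof -
    have "{0<..<r} \<subseteq> {0<..R} - {r}" using r by auto
    then have "closure {0<..<r} \<subseteq> closure ({0<..R} - {r})" by (rule closure_mono)
    moreover have "r \<in> closure {0<..<r}" using r by simp
    ultimately show ?thesis by (auto simp: at_within_eq_bot_iff)
  qed
  ultimately show ?thesis using has_field_derivative_unique dh by blast
qed



theorem lemma3p5:
  fixes g g1 g2 g3 :: "real \<Rightarrow> real"
    and x x1 x2 :: "real \<Rightarrow> real" and t0 :: real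
  assumes g1: "\<And>u. u \<ge> 0 \<Longrightarrow> (g has_real_derivative g1 u) (at u within {0..})"
    and g2: "\<And>u. u \<ge> 0 \<Longrightarrow> (g1 has_real_derivative g2 u) (at u within {0..})"
    and g3: "\<And>u. u \<ge> 0 \<Longrightarrow> (g2 has_real_derivative g3 u) (at u within {0..})"
    and g3_cont: "continuous_on {0..} g3"
    and g1_pos: "\<And>u. u \<ge> 0 \<Longrightarrow> g1 u > 0"
    and g2_pos: "\<And>u. u \<ge> 0 \<Longrightarrow> g2 u > 0"
    and g12: "\<And>u. u \<ge> 0 \<Longrightarrow> (g1 u)\<^sup>2 - g2 u \<ge> 0"
    and g123: "\<And>u. u \<ge> 0 \<Longrightarrow> 2 * (g2 u)\<^sup>2 - g1 u * g3 u > 0"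
    and x1: "\<And>t. t \<ge> t0 \<Longrightarrow> (x has_real_derivative x1 t) (at t within {t0..})"
    and x2: "\<And>t. t \<ge> t0 \<Longrightarrow> (x1 has_real_derivative x2 t) (at t within {t0..})"
    and x2_cont: "continuous_on {t0..} x2"
    and x_eq: "\<And>t. t \<ge> t0 \<Longrightarrow> 4 * (exp (x t) - 1) = hfun g g1 (x t + 2 * t + ln 16)"
    and x_dom: "\<And>t. t \<ge> t0 \<Longrightarrow> x t + 2 * t + ln 16 \<ge> - ln (Fint g 0)"
    and x_uniq: "\<And>t y. t \<ge> t0 \<Longrightarrow> y + 2 * t + ln 16 \<ge> - ln (Fint g 0) \<Longrightarrow>
                   4 * (exp y - 1) = hfun g g1 (y + 2 * t + ln 16) \<Longrightarrow> y = x t"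
    and x_init: "x t0 + 2 * t0 + ln 16 = - ln (Fint g 0)"
    and x_bdd: "\<forall>\<^sub>F t in at_top. \<bar>x t\<bar> \<le> 1"
    and xi_mono: "strict_mono_on {t0..} (\<lambda>t. x t + 2 * t + ln 16)"
  shows "\<exists>v1 v2. \<forall>r \<in> {0<..exp (- t0)}.
           (vfun g x has_real_derivative v1 r) (at r within {0<..exp (- t0)}) \<and>
           (v1 has_real_derivative v2 r) (at r within {0<..exp (- t0)}) \<and>
           v2 r + (10 - 1) / r * v1 r + exp (g (vfun g x r)) \<ge> 0"
proof -
  interpret gctx g g1 g2 g3 using g1 g2 g3 g1_pos g2_pos g12 g123 by unfold_locales auto
  define R where "R = exp (- t0)"
  define S where "S = {0<..R}"
  define \<tau> where "\<tau> r = - ln r" for r :: real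
  define E where "E r = r\<^sup>2 / 16 * exp (- x (\<tau> r))" for r
  define V where "V r = vfun g x r" for r
  have R0: "R > 0" by (simp add: R_def)
  have rpos: "r > 0" if "r \<in> S" for r using that by (simp add: S_def)
  have tau_ge: "\<tau> r \<ge> t0" if "r \<in> S" for r
  proof -
    have "ln r \<le> ln R" using that by (simp add: S_def)
    then show ?thesis by (simp add: \<tau>_def R_def)
  qed
  have tauS: "\<tau> ` S \<subseteq> {t0..}" using tau_ge by auto
  have Eexp: "E r = exp (- (x (\<tau> r) + 2 * \<tau> r + ln 16))" if "r \<in> S" for r
  proof -
    have e: "- (x (\<tau> r) + 2 * \<tau> r + ln 16) = - x (\<tau> r) + ln r + ln r - ln 16" by (simp add: \<tau>_def)
    have "exp (- (x (\<tau> r) + 2 * \<tau> r + ln 16)) = exp (- x (\<tau> r)) * exp (ln r) * exp (ln r) / exp (ln 16)"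
      unfolding e by (simp only: exp_add exp_diff)
    also have "\<dots> = E r" using rpos[OF that] by (simp add: E_def power2_eq_square)
    finally show ?thesis by simp
  qed
  have Epos: "E r > 0" if "r \<in> S" for r using rpos[OF that] by (simp add: E_def)
  have Ele: "E r \<le> Fint g 0" if "r \<in> S" for r
  proof -
    have "- ln (Fint g 0) \<le> x (\<tau> r) + 2 * \<tau> r + ln 16" using x_dom[OF tau_ge[OF that]] .
    then have "exp (- (x (\<tau> r) + 2 * \<tau> r + ln 16)) \<le> exp (ln (Fint g 0))" by simp
    then show ?thesis using Eexp[OF that] Fint_pos by simp
  qed
  have VG: "V r = G (E r)" and V0: "V r \<ge> 0" and FV: "Fint g (V r) = E r" if "r \<in> S" for r
  proof -
    have "V r = inv_into {0..} (Fint g) (E r)" by (simp add: V_def vfun_def E_def \<tau>_def)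
    then show "V r = G (E r)" "V r \<ge> 0" "Fint g (V r) = E r"
      using G_inv_into[OF Epos[OF that] Ele[OF that]] by auto
  qed
  have VS: "V ` S \<subseteq> {0..}" using V0 by auto
  have rel0: "4 * (exp (x (\<tau> r)) - 1) = 1 - g1 (V r) * (exp (g (V r)) * E r)" if "r \<in> S" for r
  proof -
    have "eta g (x (\<tau> r) + 2 * \<tau> r + ln 16) = V r"
      unfolding eta_def Eexp[OF that, symmetric] by (simp add: V_def vfun_def E_def \<tau>_def)
    then show ?thesis using x_eq[OF tau_ge[OF that]] FV[OF that] by (simp add: hfun_def)
  qed
  have dtau: "(\<tau> has_real_derivative - (1 / r)) (at r within T)" if "r > 0" for r T
    unfolding \<tau>_def using that by (auto intro!: derivative_eq_intros simp: field_simps)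
  have dx: "((\<lambda>r. x (\<tau> r)) has_real_derivative x1 (\<tau> r) * (- (1 / r))) (at r within S)" if r: "r \<in> S" for r
  proof -
    have "(x has_real_derivative x1 (\<tau> r)) (at (\<tau> r) within \<tau> ` S)"
      by (rule DERIV_subset[OF x1[OF tau_ge[OF r]] tauS])
    from DERIV_image_chain[OF this dtau[OF rpos[OF r]]] show ?thesis by (simp add: o_def)
  qed
  have dx1: "((\<lambda>r. x1 (\<tau> r)) has_real_derivative x2 (\<tau> r) * (- (1 / r))) (at r within S)" if r: "r \<in> S" for r
  proof -
    have "(x1 has_real_derivative x2 (\<tau> r)) (at (\<tau> r) within \<tau> ` S)"
      by (rule DERIV_subset[OF x2[OF tau_ge[OF r]] tauS])
    from DERIV_image_chain[OF this dtau[OF rpos[OF r]]] show ?thesis by (simp add: o_def)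
  qed
  have dE: "(E has_real_derivative E r * (2 + x1 (\<tau> r)) / r) (at r within S)" if r: "r \<in> S" for r
  proof -
    have "((\<lambda>r. r\<^sup>2 / 16 * exp (- x (\<tau> r))) has_real_derivative
        2 * r / 16 * exp (- x (\<tau> r)) + r\<^sup>2 / 16 * (exp (- x (\<tau> r)) * (- (x1 (\<tau> r) * (- (1 / r)))))) (at r within S)"
      apply (rule derivative_eq_intros dx[OF r] refl | (simp; fail))+
      by ((simp add: algebra_simps)?)
    moreover have "2 * r / 16 * exp (- x (\<tau> r)) + r\<^sup>2 / 16 * (exp (- x (\<tau> r)) * (- (x1 (\<tau> r) * (- (1 / r)))))
        = E r * (2 + x1 (\<tau> r)) / r" using rpos[OF r] by (simp add: E_def field_simps power2_eq_square)
    ultimately show ?thesis by (simp add: E_def[abs_def])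
  qed
  define Pf where "Pf r = exp (g (V r)) * E r" for r
  define yf where "yf r = 2 + x1 (\<tau> r)" for r
  define v1 where "v1 r = - (Pf r * yf r) / r" for r
  have dV: "(V has_real_derivative v1 r) (at r within S)" if r: "r \<in> S" for r
  proof -
    have "((\<lambda>r. G (E r)) has_real_derivative (- exp (g (max (G (E r)) 0))) * (E r * (2 + x1 (\<tau> r)) / r)) (at r within S)"
      by (rule DERIV_chain2[OF G_deriv[OF Epos[OF r]] dE[OF r]])
    moreover have "(- exp (g (max (G (E r)) 0))) * (E r * (2 + x1 (\<tau> r)) / r) = v1 r"
      using VG[OF r] V0[OF r] by (simp add: v1_def Pf_def yf_def)
    ultimately have "((\<lambda>r. G (E r)) has_real_derivative v1 r) (at r within S)" by simp
    then show ?thesis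
      by (rule has_field_derivative_transform_within[where d=1]) (use r VG in auto)
  qed
  have dcomp: "((\<lambda>r. h (V r)) has_real_derivative h' (V r) * v1 r) (at r within S)"
    if r: "r \<in> S" and hd: "\<And>u. u \<ge> 0 \<Longrightarrow> (h has_real_derivative h' u) (at u within {0..})" for r h h'
  proof -
    have "(h has_real_derivative h' (V r)) (at (V r) within V ` S)"
      by (rule DERIV_subset[OF hd[OF V0[OF r]] VS])
    from DERIV_image_chain[OF this dV[OF r]] show ?thesis by (simp add: o_def)
  qed
  have dgV: "((\<lambda>r. g (V r)) has_real_derivative g1 (V r) * v1 r) (at r within S)" if "r \<in> S" for r
    by (rule dcomp[OF that g1])
  have da: "((\<lambda>r. g1 (V r)) has_real_derivative g2 (V r) * v1 r) (at r within S)" if "r \<in> S" for r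
    by (rule dcomp[OF that g2])
  have db: "((\<lambda>r. g2 (V r)) has_real_derivative g3 (V r) * v1 r) (at r within S)" if "r \<in> S" for r
    by (rule dcomp[OF that g3])
  have dP: "(Pf has_real_derivative Pf r * yf r / r * (1 - g1 (V r) * Pf r)) (at r within S)" if r: "r \<in> S" for r
  proof -
    have "((\<lambda>r. exp (g (V r)) * E r) has_real_derivative
        exp (g (V r)) * (g1 (V r) * v1 r) * E r + exp (g (V r)) * (E r * (2 + x1 (\<tau> r)) / r)) (at r within S)"
      by (rule derivative_eq_intros dgV[OF r] dE[OF r] refl | (simp; fail))+
    moreover have "exp (g (V r)) * (g1 (V r) * v1 r) * E r + exp (g (V r)) * (E r * (2 + x1 (\<tau> r)) / r)
        = Pf r * yf r / r * (1 - g1 (V r) * Pf r)"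
      using rpos[OF r] by (simp add: v1_def Pf_def yf_def field_simps)
    ultimately show ?thesis by (simp add: Pf_def[abs_def])
  qed
  have dy: "(yf has_real_derivative x2 (\<tau> r) * (- (1 / r))) (at r within S)" if r: "r \<in> S" for r
    unfolding yf_def[abs_def] by (rule derivative_eq_intros dx1[OF r] refl | (simp; fail))+
  have dX: "((\<lambda>r. exp (x (\<tau> r))) has_real_derivative exp (x (\<tau> r)) * (x1 (\<tau> r) * (- (1 / r)))) (at r within S)"
    if r: "r \<in> S" for r
    by (rule derivative_eq_intros dx[OF r] refl | (simp; fail))+
  define af where "af r = g1 (V r)" for r
  define bf where "bf r = g2 (V r)" for r
  define cf where "cf r = g3 (V r)" for r
  define Xf where "Xf r = exp (x (\<tau> r))" for r
  define Qf where "Qf r = (bf r + (af r)\<^sup>2) * Pf r - af r" for r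
  have rS: "0 < r" "r \<le> R" if "r \<in> S" for r using that by (auto simp: S_def)
  have rel0': "4 * (Xf r - 1) = 1 - af r * Pf r" if "r \<in> S" for r
    using rel0[OF that] by (simp add: Xf_def af_def Pf_def)
  have x1y: "x1 (\<tau> r) = yf r - 2" for r by (simp add: yf_def)
  have v1e: "v1 r = - (Pf r * yf r) / r" for r by (simp add: v1_def)
  have rel1: "4 * Xf r * (yf r - 2) = - (Pf r * yf r * ((bf r + (af r)\<^sup>2) * Pf r - af r))" if r: "r \<in> S" for r
  proof -
    have dL: "((\<lambda>r. 4 * (Xf r - 1)) has_real_derivative 4 * (Xf r * (x1 (\<tau> r) * (- (1 / r))))) (at r within S)"
      unfolding Xf_def by (rule derivative_eq_intros dX[OF r] refl | (simp; fail))+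
    have dR: "((\<lambda>r. 1 - af r * Pf r) has_real_derivative - (bf r * v1 r * Pf r + af r * (Pf r * yf r / r * (1 - af r * Pf r)))) (at r within S)"
      unfolding af_def bf_def
      apply (rule derivative_eq_intros da[OF r] dP[OF r] refl | (simp; fail))+
      by ((simp add: algebra_simps)?)
    have "4 * (Xf r * (x1 (\<tau> r) * (- (1 / r)))) = - (bf r * v1 r * Pf r + af r * (Pf r * yf r / r * (1 - af r * Pf r)))"
      by (rule deriv_eq_on[OF rS[OF r] _ dL[unfolded S_def] dR[unfolded S_def]]) (use rel0' in \<open>auto simp: S_def\<close>)
    from rel1_alg[OF _ x1y v1e this] show ?thesis using rS[OF r] by simp
  qed
  have rel2: "4 * Xf r * (yf r - 2)\<^sup>2 + 4 * Xf r * x2 (\<tau> r) = Pf r * (yf r)\<^sup>2 * (1 - af r * Pf r) * Qf r - Pf r * x2 (\<tau> r) * Qf r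
     + Pf r * (yf r)\<^sup>2 * (- (cf r + 2 * af r * bf r) * (Pf r)\<^sup>2 + (bf r + (af r)\<^sup>2) * Pf r * (1 - af r * Pf r) + bf r * Pf r)"
    if r: "r \<in> S" for r
  proof -
    have dL: "((\<lambda>r. 4 * Xf r * (yf r - 2)) has_real_derivative
        4 * ((Xf r * (x1 (\<tau> r) * (- (1 / r)))) * (yf r - 2) + Xf r * (x2 (\<tau> r) * (- (1 / r))))) (at r within S)"
      unfolding Xf_def
      apply (rule derivative_eq_intros dX[OF r] dx[OF r] dy[OF r] refl | (simp; fail))+
      by ((simp add: algebra_simps)?)
    have dR: "((\<lambda>r. - (Pf r * yf r * Qf r)) has_real_derivative
        - ((Pf r * yf r / r * (1 - af r * Pf r) * yf r + Pf r * (x2 (\<tau> r) * (- (1 / r)))) * Qf r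
         + Pf r * yf r * ((cf r * v1 r + 2 * af r * (bf r * v1 r)) * Pf r + (bf r + (af r)\<^sup>2) * (Pf r * yf r / r * (1 - af r * Pf r)) - bf r * v1 r))) (at r within S)"
      unfolding Qf_def af_def bf_def cf_def
      apply (rule derivative_eq_intros da[OF r] db[OF r] dP[OF r] dy[OF r] refl | (simp; fail))+
      by ((simp add: algebra_simps)?)
    have "4 * ((Xf r * (x1 (\<tau> r) * (- (1 / r)))) * (yf r - 2) + Xf r * (x2 (\<tau> r) * (- (1 / r)))) =
        - ((Pf r * yf r / r * (1 - af r * Pf r) * yf r + Pf r * (x2 (\<tau> r) * (- (1 / r)))) * Qf r
         + Pf r * yf r * ((cf r * v1 r + 2 * af r * (bf r * v1 r)) * Pf r + (bf r + (af r)\<^sup>2) * (Pf r * yf r / r * (1 - af r * Pf r)) - bf r * v1 r))"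
      by (rule deriv_eq_on[OF rS[OF r] _ dL[unfolded S_def] dR[unfolded S_def]]) (use rel1 in \<open>auto simp: S_def Qf_def\<close>)
    from rel2_alg[OF _ x1y v1e Qf_def this] show ?thesis using rS[OF r] by simp
  qed
  define v2 where "v2 r = Pf r / r\<^sup>2 * ((yf r)\<^sup>2 * (af r * Pf r - 1) + x2 (\<tau> r) + yf r)" for r
  have dv1: "(v1 has_real_derivative v2 r) (at r within S)" if r: "r \<in> S" for r
  proof -
    have rn: "r \<noteq> 0" using rS[OF r] by simp
    show ?thesis
      unfolding v1_def[abs_def]
      apply (rule derivative_eq_intros dP[OF r] dy[OF r] refl | (simp add: rn; fail))+
      using rn by (simp add: v2_def af_def field_simps power2_eq_square)
  qed
  show ?thesis
  proof (rule exI[of _ v1], rule exI[of _ v2], intro ballI conjI)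
    fix r assume r0: "r \<in> {0<..exp (- t0)}"
    then have r: "r \<in> S" by (simp add: S_def R_def)
    show "(vfun g x has_real_derivative v1 r) (at r within {0<..exp (- t0)})"
      using dV[OF r] by (simp add: V_def[abs_def] S_def R_def)
    show "(v1 has_real_derivative v2 r) (at r within {0<..exp (- t0)})"
      using dv1[OF r] by (simp add: S_def R_def)
    have rn: "r \<noteq> 0" using rS[OF r] by simp
    define u where "u = V r"
    have u0: "u \<ge> 0" using V0[OF r] by (simp add: u_def)
    have Xp: "Xf r > 0" by (simp add: Xf_def)
    have Ee: "E r = r\<^sup>2 / 16 * (1 / Xf r)" by (simp add: E_def Xf_def exp_minus inverse_eq_divide)
    have GE: "exp (g (V r)) * E r = Pf r" by (simp add: Pf_def)
    have "v2 r + (10 - 1) / r * v1 r + exp (g (V r))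
        = Pf r / r\<^sup>2 * ((yf r)\<^sup>2 * (af r * Pf r - 1) + x2 (\<tau> r) - 8 * yf r + 16 * Xf r)"
      unfolding v2_def v1_def by (rule final_id[OF rn Ee Xp GE])
    also have "\<dots> \<ge> 0"
    proof (rule mult_nonneg_nonneg)
      have Pp: "Pf r > 0" using Epos[OF r] by (simp add: Pf_def)
      then show "Pf r / r\<^sup>2 \<ge> 0" by simp
      have a: "af r > 0" using g1_pos[OF u0] by (simp add: af_def u_def)
      have b: "bf r > 0" using g2_pos[OF u0] by (simp add: bf_def u_def)
      have ba: "bf r \<le> (af r)\<^sup>2" using g12[OF u0] by (simp add: af_def bf_def u_def)
      have c: "af r * cf r \<le> 2 * (bf r)\<^sup>2" using g123[OF u0] by (simp add: af_def bf_def cf_def u_def)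
      have PF: "Pf r = exp (g u) * Fint g u" using FV[OF r] by (simp add: Pf_def u_def)
      have "Fint g u \<le> exp (- g u) / g1 u" by (rule k_int_bound(2)[OF u0])
      then have "exp (g u) * Fint g u \<le> exp (g u) * (exp (- g u) / g1 u)" by (intro mult_left_mono) auto
      also have "\<dots> = 1 / g1 u" by (simp add: exp_minus field_simps)
      finally have "g1 u * (exp (g u) * Fint g u) \<le> g1 u * (1 / g1 u)"
        using g1_pos[OF u0] by (intro mult_left_mono) auto
      then have aP: "af r * Pf r \<le> 1" using g1_pos[OF u0] by (simp add: PF af_def u_def)
      have "g1 u / (g2 u + (g1 u)\<^sup>2) * exp (- g u) \<le> Fint g u" by (rule Fint_lower[OF u0])
      then have "(g2 u + (g1 u)\<^sup>2) * exp (g u) * (g1 u / (g2 u + (g1 u)\<^sup>2) * exp (- g u))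
          \<le> (g2 u + (g1 u)\<^sup>2) * exp (g u) * Fint g u"
        using g2_pos[OF u0] by (intro mult_left_mono) auto
      moreover have "(g2 u + (g1 u)\<^sup>2) * exp (g u) * (g1 u / (g2 u + (g1 u)\<^sup>2) * exp (- g u)) = g1 u"
      proof -
        have Dn: "g2 u + (g1 u)\<^sup>2 \<noteq> 0" using g2_pos[OF u0] by (metis add_pos_nonneg less_irrefl zero_le_power2)
        have gen: "D \<noteq> 0 \<Longrightarrow> D * e * (a / D * f) = a * (e * f)" for D e a f :: real by simp
        show ?thesis using gen[OF Dn, of "exp (g u)" "g1 u" "exp (- g u)"] by (simp add: exp_minus)
      qed
      ultimately have lowP: "af r \<le> (bf r + (af r)\<^sup>2) * Pf r" by (simp add: PF af_def bf_def u_def mult.assoc)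
      show "(yf r)\<^sup>2 * (af r * Pf r - 1) + x2 (\<tau> r) - 8 * yf r + 16 * Xf r \<ge> 0"
        by (rule final_alg[OF a b ba c Pp aP lowP rel0'[OF r] rel1[OF r] rel2[OF r, unfolded Qf_def]])
    qed
    finally show "v2 r + (10 - 1) / r * v1 r + exp (g (vfun g x r)) \<ge> 0" by (simp add: V_def)
  qed
qed


end
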